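(* Let $d, r, N$ be positive integers, let $\|\cdot\|$ be any norm on $\mathbb{R}^d$ with unit ball $B = \{v \in \mathbb{R}^d : \|v\| \le 1\}$, and for each $i \in [N]$ let $V_i \subseteq B$ be a finite set with $\sum_{v \in V_i} v = 0$ and $|V_i| \ge r$. Then there is an $r$-selection $\chi$ of $(V_i)_{i \in [N]}$ such that \[ \Big\| \sum_{i \in [n]} \chi(i,\ell) \Big\| \le 5d \] for all $n \in [N]$ and $\ell \in [r]$.
   Context: $[n] = \{1, \dots, n\}$. An $r$-selection of $(V_i)_{i \in [N]}$ is a mapping $\chi : [N] \times [r] \to \mathbb{R}^d$ such that for every $i \in [N]$ the set $\{\chi(i,\ell) : \ell \in [r]\}$ is an $r$-element subset of $V_i$ (so $\chi(i,1),\dots,\chi(i,r)$ are $r$ distinct elements of $V_i$). *)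

theory Defs
  imports "HOL-Analysis.Analysis"
begin

definition is_norm :: "('a::real_vector \<Rightarrow> real) \<Rightarrow> bool" where
  "is_norm nrm \<longleftrightarrow>
     (\<forall>x. 0 \<le> nrm x) \<and> (\<forall>x. nrm x = 0 \<longleftrightarrow> x = 0) \<and>
     (\<forall>c x. nrm (c *\<^sub>R x) = \<bar>c\<bar> * nrm x) \<and>
     (\<forall>x y. nrm (x + y) \<le> nrm x + nrm y)"

definition r_selection :: "nat \<Rightarrow> nat \<Rightarrow> (nat \<Rightarrow> 'a set) \<Rightarrow> (nat \<Rightarrow> nat \<Rightarrow> 'a) \<Rightarrow> bool" where
  "r_selection N r V chi \<longleftrightarrow>
     (\<forall>i\<in>{1..N}. inj_on (chi i) {1..r} \<and> chi i ` {1..r} \<subseteq> V i)"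

end

theory Submission
  imports Defs
begin

lemma dep_family:
  fixes w :: "'p \<Rightarrow> 'a::euclidean_space"
  assumes "finite P" "card P > DIM('a)"
  shows "\<exists>c. (\<exists>p\<in>P. c p \<noteq> 0) \<and> (\<Sum>p\<in>P. c p *\<^sub>R w p) = 0"
proof (cases "inj_on w P")
  case False
  then obtain p p' where pp: "p \<in> P" "p' \<in> P" "p \<noteq> p'" "w p = w p'"
    unfolding inj_on_def by blast
  define c where "c = (\<lambda>x. if x = p then (1::real) else if x = p' then -1 else 0)"
  have e: "c x *\<^sub>R w x = (if x = p then w p else 0) - (if x = p' then w p' else 0)" for x
  proof (cases "x = p")
    case True then show ?thesis using pp(3) unfolding c_def by simp
  next
    case False then show ?thesis unfolding c_def by simp
  qed
  have "(\<Sum>x\<in>P. c x *\<^sub>R w x) = (\<Sum>x\<in>P. (if x = p then w p else 0)) - (\<Sum>x\<in>P. (if x = p' then w p' else 0))"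
    unfolding e by (rule sum_subtractf)
  also have "\<dots> = w p - w p'" using pp(1,2) assms(1) by (simp add: sum.delta)
  also have "\<dots> = 0" using pp(4) by simp
  finally have "(\<Sum>x\<in>P. c x *\<^sub>R w x) = 0" .
  moreover have "c p \<noteq> 0" unfolding c_def by simp
  ultimately show ?thesis using pp(1) by blast
next
  case True
  have "card (w ` P) > DIM('a)" using True assms by (simp add: card_image)
  hence "dependent (w ` P)" using dependent_biggerset by blast
  then obtain u where u: "\<exists>v\<in>w ` P. u v \<noteq> 0" "(\<Sum>v\<in>w ` P. u v *\<^sub>R v) = 0"
    using real_vector.dependent_finite[of "w ` P"] assms(1) by auto
  have "(\<Sum>p\<in>P. u (w p) *\<^sub>R w p) = 0" using u(2) True by (simp add: sum.reindex)
  thus ?thesis using u(1) by (intro exI[of _ "u \<circ> w"]) auto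
qed

definition frac :: "(nat \<Rightarrow> 'a set) \<Rightarrow> (nat \<Rightarrow> 'a \<Rightarrow> real) \<Rightarrow> nat \<Rightarrow> 'a set" where
  "frac V x i = {v \<in> V i. 0 < x i v \<and> x i v < 1}"
definition valid :: "nat \<Rightarrow> (nat \<Rightarrow> 'a set) \<Rightarrow> (nat \<Rightarrow> nat) \<Rightarrow> (nat \<Rightarrow> 'a \<Rightarrow> real) \<Rightarrow> bool" where
  "valid N V s x \<longleftrightarrow> (\<forall>i\<in>{1..N}. (\<forall>v\<in>V i. 0 \<le> x i v \<and> x i v \<le> 1) \<and> sum (x i) (V i) = real (s i))"
definition vsum :: "(nat \<Rightarrow> 'a::real_vector set) \<Rightarrow> (nat \<Rightarrow> 'a \<Rightarrow> real) \<Rightarrow> nat set \<Rightarrow> 'a" where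
  "vsum V x I = (\<Sum>i\<in>I. \<Sum>v\<in>V i. x i v *\<^sub>R v)"
definition excess :: "(nat \<Rightarrow> 'a set) \<Rightarrow> (nat \<Rightarrow> 'a \<Rightarrow> real) \<Rightarrow> nat \<Rightarrow> nat" where
  "excess V x k = (\<Sum>i\<in>{1..k}. card (frac V x i) - 1)"
definition keep :: "nat \<Rightarrow> (nat \<Rightarrow> 'a set) \<Rightarrow> (nat \<Rightarrow> 'a \<Rightarrow> real) \<Rightarrow> (nat \<Rightarrow> 'a \<Rightarrow> real) \<Rightarrow> bool" where
  "keep N V x y \<longleftrightarrow> (\<forall>i\<in>{1..N}. \<forall>v\<in>V i. (x i v = 0 \<or> x i v = 1) \<longrightarrow> y i v = x i v)"

lemma direction:
  fixes V :: "nat \<Rightarrow> 'a::euclidean_space set"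
  assumes fin: "\<forall>i\<in>{1..k}. finite (V i)"
    and ex: "excess V y k > DIM('a)"
  shows "\<exists>\<delta>. (\<forall>i v. \<delta> i v \<noteq> 0 \<longrightarrow> i \<in> {1..k} \<and> v \<in> frac V y i)
     \<and> (\<forall>i\<in>{1..k}. (\<Sum>v\<in>V i. \<delta> i v) = 0)
     \<and> (\<Sum>i\<in>{1..k}. \<Sum>v\<in>V i. \<delta> i v *\<^sub>R v) = 0
     \<and> (\<exists>i v. \<delta> i v \<noteq> 0)"
proof -
  define F where "F i = frac V y i" for i
  define b where "b i = (SOME v. v \<in> F i)" for i
  have bF: "F i \<noteq> {} \<Longrightarrow> b i \<in> F i" for i unfolding b_def by (metis ex_in_conv someI_ex)
  have FV: "F i \<subseteq> V i" for i unfolding F_def frac_def by auto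
  have finF: "i \<in> {1..k} \<Longrightarrow> finite (F i)" for i using fin FV finite_subset by blast
  define P where "P = Sigma {1..k} (\<lambda>i. F i - {b i})"
  have finP: "finite P" unfolding P_def using finF by auto
  have cd: "card (F i - {b i}) = card (F i) - 1" if "i \<in> {1..k}" for i
  proof (cases "F i = {}")
    case True then show ?thesis by simp
  next
    case False then show ?thesis using bF finF[OF that] by (simp add: card_Diff_singleton)
  qed
  have "card P = (\<Sum>i\<in>{1..k}. card (F i - {b i}))"
    unfolding P_def using finF by (subst card_SigmaI) auto
  also have "\<dots> = excess V y k" unfolding excess_def F_def[symmetric] using cd by simp
  finally have "card P > DIM('a)" using ex by simp
  then obtain c where c: "\<exists>p\<in>P. c p \<noteq> 0" "(\<Sum>p\<in>P. c p *\<^sub>R (case p of (i,u) \<Rightarrow> u - b i)) = 0"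
    using dep_family[OF finP, of "\<lambda>p. case p of (i,u) \<Rightarrow> u - b i"] by blast
  define K where "K i = (\<Sum>u\<in>F i - {b i}. c (i,u))" for i
  define \<delta> where "\<delta> i v = (if (i,v) \<in> P then c (i,v) else 0) - (if i \<in> {1..k} \<and> v = b i then K i else 0)" for i v
  have K0: "F i = {} \<Longrightarrow> K i = 0" for i unfolding K_def by simp
  have p1: "\<forall>i v. \<delta> i v \<noteq> 0 \<longrightarrow> i \<in> {1..k} \<and> v \<in> frac V y i"
  proof (intro allI impI)
    fix i v assume "\<delta> i v \<noteq> 0"
    then consider "(i,v) \<in> P" | "i \<in> {1..k}" "v = b i" "K i \<noteq> 0" unfolding \<delta>_def by (auto split: if_splits)
    then show "i \<in> {1..k} \<and> v \<in> frac V y i"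
    proof cases
      case 1 then show ?thesis unfolding P_def F_def by auto
    next
      case 2 then have "F i \<noteq> {}" using K0 by auto
      then show ?thesis using 2 bF unfolding F_def by auto
    qed
  qed
  have rowsum: "(\<Sum>v\<in>V i. \<delta> i v *\<^sub>R v) = (\<Sum>u\<in>F i - {b i}. c (i,u) *\<^sub>R (u - b i))
      \<and> (\<Sum>v\<in>V i. \<delta> i v) = 0" if i: "i \<in> {1..k}" for i
  proof -
    have fV: "finite (V i)" using fin i by auto
    have s1: "(\<Sum>v\<in>V i. (if (i,v) \<in> P then c (i,v) else 0) *\<^sub>R v) = (\<Sum>u\<in>F i - {b i}. c (i,u) *\<^sub>R u)"
    proof -
      have "(\<Sum>v\<in>V i. (if (i,v) \<in> P then c (i,v) else 0) *\<^sub>R v) = (\<Sum>v\<in>V i. if v \<in> F i - {b i} then c (i,v) *\<^sub>R v else 0)"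
        using i by (intro sum.cong) (auto simp: P_def)
      also have "\<dots> = (\<Sum>u\<in>F i - {b i}. c (i,u) *\<^sub>R u)"
        using fV FV[of i] by (subst sum.If_cases) (auto simp: Int_absorb1 intro!: sum.cong)
      finally show ?thesis .
    qed
    have s1': "(\<Sum>v\<in>V i. (if (i,v) \<in> P then c (i,v) else 0)) = K i"
    proof -
      have "(\<Sum>v\<in>V i. (if (i,v) \<in> P then c (i,v) else 0)) = (\<Sum>v\<in>V i. if v \<in> F i - {b i} then c (i,v) else 0)"
        using i by (intro sum.cong) (auto simp: P_def)
      also have "\<dots> = K i"
        unfolding K_def using fV FV[of i] by (subst sum.If_cases) (auto simp: Int_absorb1 intro!: sum.cong)
      finally show ?thesis .
    qed
    have s2: "(\<Sum>v\<in>V i. (if i \<in> {1..k} \<and> v = b i then K i else 0) *\<^sub>R v) = K i *\<^sub>R b i"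
    proof (cases "b i \<in> V i")
      case True then show ?thesis using fV i by (simp add: if_distrib[of "\<lambda>x. x *\<^sub>R _"] sum.delta cong: if_cong)
    next
      case False
      then have "F i = {}" using bF FV by blast
      then have "K i = 0" using K0 by simp
      then show ?thesis by (auto intro!: sum.neutral)
    qed
    have s2': "(\<Sum>v\<in>V i. (if i \<in> {1..k} \<and> v = b i then K i else 0)) = K i"
    proof (cases "b i \<in> V i")
      case True then show ?thesis using fV i by (simp add: sum.delta)
    next
      case False
      then have "F i = {}" using bF FV by blast
      then have "K i = 0" using K0 by simp
      then show ?thesis by (auto intro!: sum.neutral)
    qed
    have "(\<Sum>v\<in>V i. \<delta> i v *\<^sub>R v) = (\<Sum>u\<in>F i - {b i}. c (i,u) *\<^sub>R u) - K i *\<^sub>R b i"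
      unfolding \<delta>_def scaleR_left_diff_distrib sum_subtractf s1 s2 ..
    also have "\<dots> = (\<Sum>u\<in>F i - {b i}. c (i,u) *\<^sub>R (u - b i))"
      unfolding K_def scaleR_diff_right sum_subtractf scaleR_sum_left ..
    finally show ?thesis unfolding \<delta>_def sum_subtractf s1' s2' by simp
  qed
  have "(\<Sum>i\<in>{1..k}. \<Sum>v\<in>V i. \<delta> i v *\<^sub>R v) = (\<Sum>i\<in>{1..k}. \<Sum>u\<in>F i - {b i}. c (i,u) *\<^sub>R (u - b i))"
    using rowsum by simp
  also have "\<dots> = (\<Sum>p\<in>P. c p *\<^sub>R (case p of (i,u) \<Rightarrow> u - b i))"
    unfolding P_def using finF by (subst sum.Sigma) (auto intro!: sum.cong)
  finally have p3: "(\<Sum>i\<in>{1..k}. \<Sum>v\<in>V i. \<delta> i v *\<^sub>R v) = 0" using c(2) by simp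
  from c(1) obtain i u where iu: "(i,u) \<in> P" "c (i,u) \<noteq> 0" by auto
  then have "\<delta> i u \<noteq> 0" unfolding \<delta>_def P_def by auto
  then show ?thesis using p1 p3 rowsum by blast
qed


lemma move:
  fixes V :: "nat \<Rightarrow> 'a::euclidean_space set"
  assumes fin: "\<forall>i\<in>{1..N}. finite (V i)" and kN: "k \<le> N" and val: "valid N V s y"
    and d1: "\<forall>i v. \<delta> i v \<noteq> 0 \<longrightarrow> i \<in> {1..k} \<and> v \<in> frac V y i"
    and d2: "\<forall>i\<in>{1..k}. (\<Sum>v\<in>V i. \<delta> i v) = 0"
    and d3: "(\<Sum>i\<in>{1..k}. \<Sum>v\<in>V i. \<delta> i v *\<^sub>R v) = 0"
    and d4: "\<exists>i v. \<delta> i v \<noteq> 0"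
  shows "\<exists>z. valid N V s z \<and> keep N V y z \<and> (\<forall>i. i \<notin> {1..k} \<longrightarrow> z i = y i)
     \<and> vsum V z {1..k} = vsum V y {1..k}
     \<and> (\<Sum>i\<in>{1..k}. card (frac V z i)) < (\<Sum>i\<in>{1..k}. card (frac V y i))"
proof -
  define Q where "Q = Sigma {1..k} (\<lambda>i. {v \<in> frac V y i. \<delta> i v \<noteq> 0})"
  define ratio where "ratio p = (case p of (i,v) \<Rightarrow> if \<delta> i v > 0 then (1 - y i v) / \<delta> i v else y i v / (- \<delta> i v))" for p
  have finfr: "i \<in> {1..k} \<Longrightarrow> finite (frac V y i)" for i
    using fin kN unfolding frac_def by auto
  have finQ: "finite Q" unfolding Q_def using finfr by auto
  from d4 obtain i1 v1 where "\<delta> i1 v1 \<noteq> 0" by auto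
  then have "(i1,v1) \<in> Q" using d1 unfolding Q_def by auto
  then have Qne: "Q \<noteq> {}" by auto
  define t where "t = Min (ratio ` Q)"
  obtain p0 where p0: "p0 \<in> Q" "ratio p0 = t"
  proof -
    have "Min (ratio ` Q) \<in> ratio ` Q" using Min_in[of "ratio ` Q"] finQ Qne by auto
    then show ?thesis using that by (auto simp: t_def)
  qed
  have tle: "p \<in> Q \<Longrightarrow> t \<le> ratio p" for p unfolding t_def using finQ by auto
  define z where "z i v = y i v + t * \<delta> i v" for i v
  have zbound: "0 \<le> z i v \<and> z i v \<le> 1" if "i \<in> {1..N}" "v \<in> V i" for i v
  proof (cases "\<delta> i v = 0")
    case True then show ?thesis using val that unfolding z_def valid_def by auto
  next
    case False
    then have iv: "(i,v) \<in> Q" "0 < y i v" "y i v < 1" using d1 unfolding Q_def frac_def by auto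
    have r: "t \<le> ratio (i,v)" using tle iv by auto
    have rpos: "0 < ratio p" if "p \<in> Q" for p
    proof -
      obtain a b where p: "p = (a,b)" by (cases p)
      then have "0 < y a b" "y a b < 1" "\<delta> a b \<noteq> 0" using that unfolding Q_def frac_def by auto
      then show ?thesis unfolding p ratio_def by (auto simp: divide_pos_neg)
    qed
    have tpos: "0 \<le> t" using p0 rpos[OF p0(1)] by simp
    show ?thesis
    proof (cases "\<delta> i v > 0")
      case True
      then have "t * \<delta> i v \<le> 1 - y i v" using r by (simp add: ratio_def pos_le_divide_eq)
      moreover have "0 \<le> t * \<delta> i v" using tpos True by simp
      ultimately show ?thesis using iv unfolding z_def by auto
    next
      case F2: False
      then have neg: "\<delta> i v < 0" using False by auto
      have "t \<le> y i v / (- \<delta> i v)" using r F2 by (simp add: ratio_def)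
      then have "t * (- \<delta> i v) \<le> y i v" using neg pos_le_divide_eq[of "- \<delta> i v" t "y i v"] by linarith
      moreover have "0 \<le> t * (- \<delta> i v)" using tpos neg by (simp add: mult_nonneg_nonpos)
      ultimately show ?thesis using iv unfolding z_def by (auto simp: algebra_simps)
    qed
  qed
  have zout: "\<forall>i. i \<notin> {1..k} \<longrightarrow> z i = y i" using d1 unfolding z_def by (metis (no_types, lifting) add_0_right ext mult_zero_right)
  have valz: "valid N V s z" unfolding valid_def
  proof (rule ballI, rule conjI)
    fix i assume i: "i \<in> {1..N}"
    show "\<forall>v\<in>V i. 0 \<le> z i v \<and> z i v \<le> 1" using zbound i by auto
    show "sum (z i) (V i) = real (s i)"
    proof (cases "i \<in> {1..k}")
      case True
      have "sum (z i) (V i) = sum (y i) (V i) + t * (\<Sum>v\<in>V i. \<delta> i v)"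
        unfolding z_def by (simp add: sum.distrib sum_distrib_left)
      then show ?thesis using d2 True val i unfolding valid_def by auto
    next
      case False then show ?thesis using zout val i unfolding valid_def by auto
    qed
  qed
  have keepz: "keep N V y z" unfolding keep_def z_def using d1 unfolding frac_def by force
  have "vsum V z {1..k} = vsum V y {1..k} + t *\<^sub>R (\<Sum>i\<in>{1..k}. \<Sum>v\<in>V i. \<delta> i v *\<^sub>R v)"
    unfolding vsum_def z_def by (simp add: scaleR_add_left sum.distrib scaleR_sum_right)
  then have vs: "vsum V z {1..k} = vsum V y {1..k}" using d3 by simp
  have sub: "frac V z i \<subseteq> frac V y i" if "i \<in> {1..k}" for i
  proof
    fix v assume v: "v \<in> frac V z i"
    show "v \<in> frac V y i"
    proof (cases "\<delta> i v = 0")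
      case True then show ?thesis using v unfolding frac_def z_def by auto
    next
      case False then show ?thesis using d1 by auto
    qed
  qed
  obtain i0 v0 where p0e: "p0 = (i0,v0)" by (cases p0)
  have i0: "i0 \<in> {1..k}" "v0 \<in> frac V y i0" "\<delta> i0 v0 \<noteq> 0" using p0 p0e unfolding Q_def by auto
  have "z i0 v0 = 0 \<or> z i0 v0 = 1"
  proof (cases "\<delta> i0 v0 > 0")
    case True
    then have "t = (1 - y i0 v0) / \<delta> i0 v0" using p0 p0e unfolding ratio_def by auto
    then show ?thesis using True unfolding z_def by auto
  next
    case False
    then have "t = y i0 v0 / (- \<delta> i0 v0)" using p0 p0e unfolding ratio_def by auto
    then show ?thesis using False i0 unfolding z_def by auto
  qed
  then have "v0 \<notin> frac V z i0" unfolding frac_def by auto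
  then have "frac V z i0 \<subset> frac V y i0" using sub[OF i0(1)] i0(2) by auto
  then have "card (frac V z i0) < card (frac V y i0)" using finfr[OF i0(1)] psubset_card_mono by blast
  then have "(\<Sum>i\<in>{1..k}. card (frac V z i)) < (\<Sum>i\<in>{1..k}. card (frac V y i))"
    using sub finfr i0(1) by (intro sum_strict_mono_ex1) (simp, meson card_mono, blast)
  then show ?thesis using valz keepz zout vs by blast
qed


lemma keep_trans: "keep N V x y \<Longrightarrow> keep N V y z \<Longrightarrow> keep N V x z"
  unfolding keep_def by metis

lemma keep_refl: "keep N V x x"
  unfolding keep_def by auto

lemma drl:
  fixes V :: "nat \<Rightarrow> 'a::euclidean_space set"
  assumes fin: "\<forall>i\<in>{1..N}. finite (V i)" and kN: "k \<le> N" and val: "valid N V s y"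
  shows "\<exists>z. valid N V s z \<and> keep N V y z \<and> (\<forall>i. i \<notin> {1..k} \<longrightarrow> z i = y i)
     \<and> vsum V z {1..k} = vsum V y {1..k} \<and> excess V z k \<le> DIM('a)"
  using val
proof (induction "\<Sum>i\<in>{1..k}. card (frac V y i)" arbitrary: y rule: less_induct)
  case less
  show ?case
  proof (cases "excess V y k \<le> DIM('a)")
    case True then show ?thesis using less.prems by (intro exI[of _ y]) (auto simp: keep_def)
  next
    case False
    have fk: "\<forall>i\<in>{1..k}. finite (V i)" using fin kN by auto
    obtain \<delta> where d: "(\<forall>i v. \<delta> i v \<noteq> 0 \<longrightarrow> i \<in> {1..k} \<and> v \<in> frac V y i)"
     "(\<forall>i\<in>{1..k}. (\<Sum>v\<in>V i. \<delta> i v) = 0)"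
     "(\<Sum>i\<in>{1..k}. \<Sum>v\<in>V i. \<delta> i v *\<^sub>R v) = 0"
     "(\<exists>i v. \<delta> i v \<noteq> 0)"
      using direction[OF fk, of y] False by auto
    obtain z1 where z1: "valid N V s z1" "keep N V y z1" "(\<forall>i. i \<notin> {1..k} \<longrightarrow> z1 i = y i)"
      "vsum V z1 {1..k} = vsum V y {1..k}"
      "(\<Sum>i\<in>{1..k}. card (frac V z1 i)) < (\<Sum>i\<in>{1..k}. card (frac V y i))"
      using move[OF fin kN less.prems d] by blast
    obtain z where z: "valid N V s z" "keep N V z1 z" "(\<forall>i. i \<notin> {1..k} \<longrightarrow> z i = z1 i)"
      "vsum V z {1..k} = vsum V z1 {1..k}" "excess V z k \<le> DIM('a)"
      using less.hyps[OF z1(5) z1(1)] by blast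
    show ?thesis using z z1 keep_trans[OF z1(2) z(2)] by (intro exI[of _ z]) auto
  qed
qed

lemma row_decomp:
  assumes "finite W" "\<forall>v\<in>W. 0 \<le> x v \<and> x v \<le> (1::real)"
  shows "sum x W = real (card {v\<in>W. x v = 1}) + sum x {v\<in>W. 0 < x v \<and> x v < 1}"
proof -
  have "sum x W = sum x (W \<inter> {v. x v = 1}) + sum x (W - {v. x v = 1})"
    using assms(1) by (rule sum.Int_Diff)
  moreover have "sum x (W \<inter> {v. x v = 1}) = real (card {v\<in>W. x v = 1})"
  proof -
    have "sum x (W \<inter> {v. x v = 1}) = sum (\<lambda>_. 1) {v\<in>W. x v = 1}"
      by (rule sum.cong) auto
    then show ?thesis by simp
  qed
  moreover have "sum x (W - {v. x v = 1}) = sum x {v\<in>W. 0 < x v \<and> x v < 1}"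
    using assms by (intro sum.mono_neutral_cong_right) force+
  ultimately show ?thesis by simp
qed

lemma frac_card_ne1:
  assumes "finite (V i)" "\<forall>v\<in>V i. 0 \<le> x i v \<and> x i v \<le> 1" "sum (x i) (V i) = real s"
  shows "card (frac V x i) \<noteq> 1"
proof
  assume c: "card (frac V x i) = 1"
  then obtain w where w: "frac V x i = {w}" by (meson card_1_singletonE)
  have "real s = real (card {v\<in>V i. x i v = 1}) + x i w"
    using row_decomp[OF assms(1,2)] assms(3) w unfolding frac_def by simp
  moreover have "0 < x i w" "x i w < 1" using w unfolding frac_def by auto
  ultimately have "real (card {v\<in>V i. x i v = 1}) < real s" "real s < real (card {v\<in>V i. x i v = 1}) + 1"
    by linarith+
  then have "card {v\<in>V i. x i v = 1} < s" "s < card {v\<in>V i. x i v = 1} + 1" by linarith+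
  then show False by linarith
qed

lemma round_row:
  assumes "finite W" "\<forall>v\<in>W. 0 \<le> x v \<and> x v \<le> (1::real)" "sum x W = real s"
  shows "\<exists>T\<subseteq>W. card T = s \<and> (\<forall>v\<in>W. x v = 1 \<longrightarrow> v \<in> T) \<and> (\<forall>v\<in>W. x v = 0 \<longrightarrow> v \<notin> T)"
proof -
  define I where "I = {v\<in>W. x v = 1}"
  define F where "F = {v\<in>W. 0 < x v \<and> x v < 1}"
  have dec: "real s = real (card I) + sum x F" using row_decomp[OF assms(1,2)] assms(3) I_def F_def by simp
  have finF: "finite F" "finite I" using assms(1) unfolding F_def I_def by auto
  have "sum x F \<le> sum (\<lambda>_. 1) F" by (rule sum_mono) (auto simp: F_def)
  then have sF: "sum x F \<le> real (card F)" by simp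
  have "0 \<le> sum x F" by (rule sum_nonneg) (auto simp: F_def)
  then have le1: "card I \<le> s" using dec by linarith
  have le2: "s - card I \<le> card F" using dec sF le1 by linarith
  obtain G where G: "G \<subseteq> F" "card G = s - card I" "finite G" using obtain_subset_with_card_n[OF le2] by blast
  have disj: "I \<inter> G = {}" using G(1) unfolding I_def F_def by auto
  have "card (I \<union> G) = s" using card_Un_disjoint[OF finF(2) G(3) disj] G(2) le1 by simp
  moreover have "I \<union> G \<subseteq> W" using G(1) unfolding I_def F_def by auto
  moreover have "\<forall>v\<in>W. x v = 1 \<longrightarrow> v \<in> I \<union> G" unfolding I_def by auto
  moreover have "\<forall>v\<in>W. x v = 0 \<longrightarrow> v \<notin> I \<union> G" using G(1) unfolding I_def F_def by auto
  ultimately show ?thesis by blast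
qed


lemma seq:
  fixes V :: "nat \<Rightarrow> 'a::euclidean_space set"
  assumes fin: "\<forall>i\<in>{1..N}. finite (V i)" and val: "valid N V s a0"
  shows "k \<le> N \<Longrightarrow> \<exists>X. \<forall>j\<le>k. valid N V s (X j) \<and> (\<forall>i\<in>{1..N}. j < i \<longrightarrow> X j i = a0 i)
     \<and> vsum V (X j) {1..j} = vsum V a0 {1..j} \<and> excess V (X j) j \<le> DIM('a)
     \<and> (\<forall>j'. j \<le> j' \<and> j' \<le> k \<longrightarrow> keep N V (X j) (X j'))"
proof (induction k)
  case 0
  show ?case using val by (intro exI[of _ "\<lambda>_. a0"]) (auto simp: excess_def keep_def)
next
  case (Suc k)
  then obtain X where X: "\<forall>j\<le>k. valid N V s (X j) \<and> (\<forall>i\<in>{1..N}. j < i \<longrightarrow> X j i = a0 i)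
     \<and> vsum V (X j) {1..j} = vsum V a0 {1..j} \<and> excess V (X j) j \<le> DIM('a)
     \<and> (\<forall>j'. j \<le> j' \<and> j' \<le> k \<longrightarrow> keep N V (X j) (X j'))" by auto
  define y where "y = X k"
  have y: "valid N V s y" "\<forall>i\<in>{1..N}. k < i \<longrightarrow> y i = a0 i" "vsum V y {1..k} = vsum V a0 {1..k}"
    using X unfolding y_def by auto
  have ins: "{1..Suc k} = insert (Suc k) {1..k}" by auto
  have "vsum V y {1..Suc k} = vsum V a0 {1..Suc k}"
    unfolding vsum_def ins using y(2,3) Suc.prems unfolding vsum_def by simp
  obtain z where z: "valid N V s z" "keep N V y z" "(\<forall>i. i \<notin> {1..Suc k} \<longrightarrow> z i = y i)"
      "vsum V z {1..Suc k} = vsum V y {1..Suc k}" "excess V z (Suc k) \<le> DIM('a)"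
    using drl[OF fin Suc.prems y(1)] by blast
  define X' where "X' = X(Suc k := z)"
  have "\<forall>j\<le>Suc k. valid N V s (X' j) \<and> (\<forall>i\<in>{1..N}. j < i \<longrightarrow> X' j i = a0 i)
     \<and> vsum V (X' j) {1..j} = vsum V a0 {1..j} \<and> excess V (X' j) j \<le> DIM('a)
     \<and> (\<forall>j'. j \<le> j' \<and> j' \<le> Suc k \<longrightarrow> keep N V (X' j) (X' j'))"
  proof (intro allI impI)
    fix j assume j: "j \<le> Suc k"
    show "valid N V s (X' j) \<and> (\<forall>i\<in>{1..N}. j < i \<longrightarrow> X' j i = a0 i)
     \<and> vsum V (X' j) {1..j} = vsum V a0 {1..j} \<and> excess V (X' j) j \<le> DIM('a)
     \<and> (\<forall>j'. j \<le> j' \<and> j' \<le> Suc k \<longrightarrow> keep N V (X' j) (X' j'))"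
    proof (cases "j = Suc k")
      case True
      then show ?thesis using z y \<open>vsum V y {1..Suc k} = vsum V a0 {1..Suc k}\<close>
        unfolding X'_def by (auto simp: keep_refl)
    next
      case False
      then have jk: "j \<le> k" using j by auto
      have kp: "keep N V (X' j) (X' j')" if "j \<le> j'" "j' \<le> Suc k" for j'
      proof (cases "j' = Suc k")
        case True
        have "keep N V (X j) (X k)" using X jk by auto
        then show ?thesis using True False keep_trans z(2) unfolding X'_def y_def by auto
      next
        case F2: False
        then show ?thesis using X jk that False unfolding X'_def by auto
      qed
      show ?thesis using X jk False kp unfolding X'_def by auto
    qed
  qed
  then show ?case by blast
qed

context
  fixes nrm :: "'a::euclidean_space \<Rightarrow> real"
  assumes nrm: "is_norm nrm"
begin

lemma nrm_0: "nrm 0 = 0" using nrm unfolding is_norm_def by blast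
lemma nrm_scale: "nrm (c *\<^sub>R x) = \<bar>c\<bar> * nrm x" using nrm unfolding is_norm_def by blast
lemma nrm_tri: "nrm (x + y) \<le> nrm x + nrm y" using nrm unfolding is_norm_def by blast
lemma nrm_minus: "nrm (- x) = nrm x" using nrm_scale[of "-1" x] by simp
lemma nrm_sum: "nrm (sum f A) \<le> (\<Sum>a\<in>A. nrm (f a))"
proof (induction A rule: infinite_finite_induct)
  case (insert x F)
  then show ?case using nrm_tri[of "f x" "sum f F"] by simp
qed (auto simp: nrm_0)
lemma nrm_diff: "nrm (x - y) \<le> nrm x + nrm y"
  using nrm_tri[of x "- y"] nrm_minus[of y] by simp

lemma RL:
  fixes V :: "nat \<Rightarrow> 'a set"
  assumes fin: "\<forall>i\<in>{1..N}. finite (V i)" and ball: "\<forall>i\<in>{1..N}. \<forall>v\<in>V i. nrm v \<le> 1"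
    and val: "valid N V s a0"
  shows "\<exists>T. (\<forall>i\<in>{1..N}. T i \<subseteq> V i \<and> card (T i) = s i) \<and>
    (\<forall>k\<le>N. nrm (\<Sum>i\<in>{1..k}. ((\<Sum>v\<in>T i. v) - (\<Sum>v\<in>V i. a0 i v *\<^sub>R v))) \<le> 2 * DIM('a))"
proof -
  obtain X where X: "\<forall>j\<le>N. valid N V s (X j) \<and> (\<forall>i\<in>{1..N}. j < i \<longrightarrow> X j i = a0 i)
     \<and> vsum V (X j) {1..j} = vsum V a0 {1..j} \<and> excess V (X j) j \<le> DIM('a)
     \<and> (\<forall>j'. j \<le> j' \<and> j' \<le> N \<longrightarrow> keep N V (X j) (X j'))"
    using seq[OF fin val, of N] by auto
  define x where "x = X N"
  have vx: "valid N V s x" using X unfolding x_def by auto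
  have "\<forall>i\<in>{1..N}. \<exists>T\<subseteq>V i. card T = s i \<and> (\<forall>v\<in>V i. x i v = 1 \<longrightarrow> v \<in> T) \<and> (\<forall>v\<in>V i. x i v = 0 \<longrightarrow> v \<notin> T)"
    using vx fin unfolding valid_def by (intro ballI round_row) auto
  then obtain T where T: "\<forall>i\<in>{1..N}. T i \<subseteq> V i \<and> card (T i) = s i \<and> (\<forall>v\<in>V i. x i v = 1 \<longrightarrow> v \<in> T i) \<and> (\<forall>v\<in>V i. x i v = 0 \<longrightarrow> v \<notin> T i)"
    by metis
  have bound: "nrm (\<Sum>i\<in>{1..k}. ((\<Sum>v\<in>T i. v) - (\<Sum>v\<in>V i. a0 i v *\<^sub>R v))) \<le> 2 * DIM('a)" if k: "k \<le> N" for k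
  proof -
    define y where "y = X k"
    have y: "valid N V s y" "vsum V y {1..k} = vsum V a0 {1..k}" "excess V y k \<le> DIM('a)" "keep N V y x"
      using X k unfolding y_def x_def by auto
    define ind where "ind i v = (if v \<in> T i then 1 else (0::real))" for i v
    have row: "(\<Sum>v\<in>T i. v) - (\<Sum>v\<in>V i. y i v *\<^sub>R v) = (\<Sum>v\<in>frac V y i. (ind i v - y i v) *\<^sub>R v)"
      if i: "i \<in> {1..k}" for i
    proof -
      have iN: "i \<in> {1..N}" using i k by auto
      have fV: "finite (V i)" using fin iN by auto
      have "(\<Sum>v\<in>T i. v) = (\<Sum>v\<in>V i. ind i v *\<^sub>R v)"
      proof -
        have "(\<Sum>v\<in>V i. ind i v *\<^sub>R v) = (\<Sum>v\<in>V i. if v \<in> T i then v else 0)"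
          unfolding ind_def by (rule sum.cong) auto
        also have "\<dots> = (\<Sum>v\<in>T i. v)" using T iN fV by (simp add: sum.If_cases Int_absorb1)
        finally show ?thesis by simp
      qed
      then have "(\<Sum>v\<in>T i. v) - (\<Sum>v\<in>V i. y i v *\<^sub>R v) = (\<Sum>v\<in>V i. (ind i v - y i v) *\<^sub>R v)"
        by (simp add: sum_subtractf scaleR_left_diff_distrib)
      also have "\<dots> = (\<Sum>v\<in>frac V y i. (ind i v - y i v) *\<^sub>R v)"
      proof (rule sum.mono_neutral_right)
        show "finite (V i)" by fact
        show "frac V y i \<subseteq> V i" unfolding frac_def by auto
        show "\<forall>v\<in>V i - frac V y i. (ind i v - y i v) *\<^sub>R v = 0"
        proof
          fix v assume v: "v \<in> V i - frac V y i"
          then have "y i v = 0 \<or> y i v = 1" using y(1) iN unfolding valid_def frac_def by force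
          moreover then have "x i v = y i v" using y(4) iN v unfolding keep_def by auto
          ultimately have "ind i v = y i v" using T iN v unfolding ind_def by auto
          then show "(ind i v - y i v) *\<^sub>R v = 0" by simp
        qed
      qed
      finally show ?thesis .
    qed
    have "(\<Sum>i\<in>{1..k}. ((\<Sum>v\<in>T i. v) - (\<Sum>v\<in>V i. a0 i v *\<^sub>R v)))
        = (\<Sum>i\<in>{1..k}. (\<Sum>v\<in>T i. v)) - vsum V a0 {1..k}"
      unfolding vsum_def by (simp add: sum_subtractf)
    also have "\<dots> = (\<Sum>i\<in>{1..k}. ((\<Sum>v\<in>T i. v) - (\<Sum>v\<in>V i. y i v *\<^sub>R v)))"
      using y(2) unfolding vsum_def by (simp add: sum_subtractf)
    also have "\<dots> = (\<Sum>i\<in>{1..k}. \<Sum>v\<in>frac V y i. (ind i v - y i v) *\<^sub>R v)"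
      using row by simp
    finally have eq: "(\<Sum>i\<in>{1..k}. ((\<Sum>v\<in>T i. v) - (\<Sum>v\<in>V i. a0 i v *\<^sub>R v)))
        = (\<Sum>i\<in>{1..k}. \<Sum>v\<in>frac V y i. (ind i v - y i v) *\<^sub>R v)" .
    have "nrm (\<Sum>i\<in>{1..k}. \<Sum>v\<in>frac V y i. (ind i v - y i v) *\<^sub>R v)
        \<le> (\<Sum>i\<in>{1..k}. nrm (\<Sum>v\<in>frac V y i. (ind i v - y i v) *\<^sub>R v))" by (rule nrm_sum)
    also have "\<dots> \<le> (\<Sum>i\<in>{1..k}. real (card (frac V y i)))"
    proof (rule sum_mono)
      fix i assume i: "i \<in> {1..k}"
      have iN: "i \<in> {1..N}" using i k by auto
      have "nrm (\<Sum>v\<in>frac V y i. (ind i v - y i v) *\<^sub>R v) \<le> (\<Sum>v\<in>frac V y i. nrm ((ind i v - y i v) *\<^sub>R v))"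
        by (rule nrm_sum)
      also have "\<dots> \<le> (\<Sum>v\<in>frac V y i. 1)"
      proof (rule sum_mono)
        fix v assume v: "v \<in> frac V y i"
        have "\<bar>ind i v - y i v\<bar> \<le> 1" using v unfolding frac_def ind_def by auto
        moreover have "nrm v \<le> 1" "0 \<le> nrm v" using ball iN v nrm unfolding frac_def is_norm_def by auto
        ultimately show "nrm ((ind i v - y i v) *\<^sub>R v) \<le> 1"
          unfolding nrm_scale by (metis abs_ge_zero mult_le_one)
      qed
      finally show "nrm (\<Sum>v\<in>frac V y i. (ind i v - y i v) *\<^sub>R v) \<le> real (card (frac V y i))" by simp
    qed
    also have "\<dots> \<le> (\<Sum>i\<in>{1..k}. 2 * real (card (frac V y i) - 1))"
    proof (rule sum_mono)
      fix i assume i: "i \<in> {1..k}"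
      have iN: "i \<in> {1..N}" using i k by auto
      have "card (frac V y i) \<noteq> 1" using frac_card_ne1[of V i y "s i"] y(1) fin iN unfolding valid_def by auto
      then show "real (card (frac V y i)) \<le> 2 * real (card (frac V y i) - 1)" by (cases "card (frac V y i)") auto
    qed
    also have "\<dots> = 2 * real (excess V y k)" unfolding excess_def by (simp add: sum_distrib_left)
    also have "\<dots> \<le> 2 * DIM('a)" using y(3) by simp
    finally show ?thesis unfolding eq .
  qed
  show ?thesis using T bound by (intro exI[of _ T]) auto
qed


end

definition hq :: "nat \<Rightarrow> real" where "hq q = (if q = 1 then 0 else 5/2 - 3 / real q)"

lemma hq_step:
  assumes "2 \<le> q" "1 \<le> q'" "2 * q' \<le> q + 1"
  shows "hq q' + 1 / real q' \<le> hq q"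
proof (cases "q' = 1")
  case True
  have "3 / real q \<le> 3 / 2" using assms(1) by (simp add: field_simps)
  then show ?thesis using True assms(1) unfolding hq_def by auto
next
  case False
  then have "2 \<le> q'" using assms by auto
  then have "3 * q' \<le> 2 * q" using assms by linarith
  then have "3 * real q' \<le> 2 * real q" by linarith
  then have "3 / real q \<le> 2 / real q'" using assms \<open>2 \<le> q'\<close> by (simp add: field_simps)
  moreover have "hq q' = 5/2 - 3 / real q'" using False unfolding hq_def by auto
  moreover have "hq q = 5/2 - 3 / real q" using assms unfolding hq_def by auto
  ultimately show ?thesis by (simp add: field_simps)
qed

lemma hq_final: "1 \<le> r \<Longrightarrow> hq r + 1 / real r \<le> 5/2"
  unfolding hq_def by (auto simp: field_simps)

lemma vec_id1:
  fixes A B b :: "'b::real_vector"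
  assumes "q1 > 0" "q > 0"
  shows "(b - (1/q1) *\<^sub>R B) + (1/q1) *\<^sub>R (B - (q1/q) *\<^sub>R A) = b - (1/q) *\<^sub>R A"
  using assms by (simp add: algebra_simps)

lemma vec_id2:
  fixes A B b :: "'b::real_vector"
  assumes "q1 > 0" "q2 > 0" "q = q1 + q2"
  shows "(b - (1/q2) *\<^sub>R (A - B)) + (- (1/q2)) *\<^sub>R (B - (q1/q) *\<^sub>R A) = b - (1/q) *\<^sub>R A"
proof -
  have "q1 - q = - q2" using assms(3) by simp
  then have "(q1 - q) / (q2 * q) = (- q2) / (q2 * q)" by simp
  also have "\<dots> = - (1/q)" using assms(2) by (simp add: field_simps)
  finally have "(q1 - q) / (q2 * q) = - (1/q)" .
  moreover have "- (1/q2) + (1/q2) * (q1/q) = (q1 - q) / (q2 * q)"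
  proof -
    have qpos: "q > 0" using assms by simp
    show ?thesis using assms(2) qpos by (simp add: field_simps)
  qed
  ultimately have c: "- (1/q2) + (1/q2) * (q1/q) = - (1/q)" by simp
  have "(b - (1/q2) *\<^sub>R (A - B)) + (- (1/q2)) *\<^sub>R (B - (q1/q) *\<^sub>R A)
      = b + (- (1/q2) + (1/q2) * (q1/q)) *\<^sub>R A"
    by (simp add: algebra_simps)
  then show ?thesis unfolding c by simp
qed

context
  fixes nrm :: "'a::euclidean_space \<Rightarrow> real"
  assumes nrm: "is_norm nrm"
begin

lemma nrm_comb:
  "nrm (\<Sum>i\<in>I. (a i + c *\<^sub>R b i)) \<le> nrm (\<Sum>i\<in>I. a i) + \<bar>c\<bar> * nrm (\<Sum>i\<in>I. b i)"
proof -
  have "(\<Sum>i\<in>I. (a i + c *\<^sub>R b i)) = (\<Sum>i\<in>I. a i) + c *\<^sub>R (\<Sum>i\<in>I. b i)"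
    by (simp add: sum.distrib scaleR_sum_right)
  then show ?thesis using nrm_tri[OF nrm] nrm_scale[OF nrm] by metis
qed

lemma tree:
  fixes S :: "nat \<Rightarrow> 'a set"
  assumes "1 \<le> q" "\<forall>i\<in>{1..N}. finite (S i) \<and> card (S i) = q \<and> (\<forall>v\<in>S i. nrm v \<le> 1)"
  shows "\<exists>ch. (\<forall>i\<in>{1..N}. inj_on (ch i) {1..q} \<and> ch i ` {1..q} \<subseteq> S i) \<and>
    (\<forall>k\<le>N. \<forall>l\<in>{1..q}. nrm (\<Sum>i\<in>{1..k}. (ch i l - (1 / real q) *\<^sub>R (\<Sum>v\<in>S i. v))) \<le> 2 * DIM('a) * hq q)"
  using assms
proof (induction q arbitrary: S rule: less_induct)
  case (less q)
  show ?case
  proof (cases "q = 1")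
    case True
    define ch where "ch i l = the_elem (S i)" for i and l :: nat
    have el: "S i = {ch i l}" if "i \<in> {1..N}" for i l
      using less.prems(2) that True unfolding ch_def by (metis card_1_singletonE the_elem_eq)
    have z: "ch i l - (1 / real q) *\<^sub>R (\<Sum>v\<in>S i. v) = 0" if "i \<in> {1..k}" "k \<le> N" for i k l
      using el[of i l] that True by auto
    show ?thesis
    proof (intro exI[of _ ch] conjI ballI allI impI)
      fix i assume "i \<in> {1..N}"
      then show "inj_on (ch i) {1..q}" "ch i ` {1..q} \<subseteq> S i" using True el by auto
    next
      fix k l assume "k \<le> N" "l \<in> {1..q}"
      then have "(\<Sum>i\<in>{1..k}. (ch i l - (1 / real q) *\<^sub>R (\<Sum>v\<in>S i. v))) = 0"
        using z by (intro sum.neutral) auto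
      then show "nrm (\<Sum>i\<in>{1..k}. (ch i l - (1 / real q) *\<^sub>R (\<Sum>v\<in>S i. v))) \<le> 2 * DIM('a) * hq q"
        using True by (simp add: nrm_0[OF nrm] hq_def)
    qed
  next
    case False
    then have q2: "2 \<le> q" using less.prems by auto
    define q1 where "q1 = q div 2"
    define q2 where "q2 = q - q1"
    have q1p: "1 \<le> q1" "q1 < q" "2 * q1 \<le> q + 1" using q2 unfolding q1_def by auto
    have q2p: "1 \<le> q2" "q2 < q" "2 * q2 \<le> q + 1" "q = q1 + q2" using q2 unfolding q1_def q2_def by auto
    define a0 where "a0 i v = real q1 / real q" for i :: nat and v :: 'a
    have fin: "\<forall>i\<in>{1..N}. finite (S i)" and ball: "\<forall>i\<in>{1..N}. \<forall>v\<in>S i. nrm v \<le> 1"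
      using less.prems by auto
    have val: "valid N S (\<lambda>_. q1) a0" unfolding valid_def a0_def
      using less.prems q1p by (auto simp: field_simps)
    obtain T where T: "\<forall>i\<in>{1..N}. T i \<subseteq> S i \<and> card (T i) = q1"
      "\<forall>k\<le>N. nrm (\<Sum>i\<in>{1..k}. ((\<Sum>v\<in>T i. v) - (\<Sum>v\<in>S i. a0 i v *\<^sub>R v))) \<le> 2 * DIM('a)"
      using RL[OF nrm fin ball val] by auto
    have Ta: "(\<Sum>v\<in>S i. a0 i v *\<^sub>R v) = (real q1 / real q) *\<^sub>R (\<Sum>v\<in>S i. v)" for i
      unfolding a0_def by (simp add: scaleR_sum_right)
    define U where "U i = S i - T i" for i
    have finT: "\<forall>i\<in>{1..N}. finite (T i)" using T fin finite_subset by blast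
    have U: "\<forall>i\<in>{1..N}. finite (U i) \<and> card (U i) = q2 \<and> (\<forall>v\<in>U i. nrm v \<le> 1)"
      using T fin ball less.prems finT unfolding U_def q2_def by (auto simp: card_Diff_subset)
    have Tp: "\<forall>i\<in>{1..N}. finite (T i) \<and> card (T i) = q1 \<and> (\<forall>v\<in>T i. nrm v \<le> 1)"
      using T finT ball by blast
    obtain ch1 where c1: "\<forall>i\<in>{1..N}. inj_on (ch1 i) {1..q1} \<and> ch1 i ` {1..q1} \<subseteq> T i"
      "\<forall>k\<le>N. \<forall>l\<in>{1..q1}. nrm (\<Sum>i\<in>{1..k}. (ch1 i l - (1 / real q1) *\<^sub>R (\<Sum>v\<in>T i. v))) \<le> 2 * DIM('a) * hq q1"
      using less.IH[OF q1p(2) q1p(1) Tp] by blast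
    obtain ch2 where c2: "\<forall>i\<in>{1..N}. inj_on (ch2 i) {1..q2} \<and> ch2 i ` {1..q2} \<subseteq> U i"
      "\<forall>k\<le>N. \<forall>l\<in>{1..q2}. nrm (\<Sum>i\<in>{1..k}. (ch2 i l - (1 / real q2) *\<^sub>R (\<Sum>v\<in>U i. v))) \<le> 2 * DIM('a) * hq q2"
      using less.IH[OF q2p(2) q2p(1) U] by blast
    define ch where "ch i l = (if l \<le> q1 then ch1 i l else ch2 i (l - q1))" for i l
    have inj: "inj_on (ch i) {1..q}" "ch i ` {1..q} \<subseteq> S i" if i: "i \<in> {1..N}" for i
    proof -
      have m1: "l \<in> {1..q} \<Longrightarrow> l \<le> q1 \<Longrightarrow> ch i l \<in> T i" for l using c1(1) i unfolding ch_def by (auto simp: image_subset_iff)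
      have m2: "ch i l \<in> U i" if "l \<in> {1..q}" "\<not> l \<le> q1" for l
      proof -
        have "l - q1 \<in> {1..q2}" using that q2p(4) by auto
        then show ?thesis using c2(1) i that unfolding ch_def by (auto simp: image_subset_iff)
      qed
      show "ch i ` {1..q} \<subseteq> S i" using m1 m2 T i unfolding U_def by blast
      show "inj_on (ch i) {1..q}"
      proof (rule inj_onI)
        fix l l' assume l: "l \<in> {1..q}" "l' \<in> {1..q}" "ch i l = ch i l'"
        consider "l \<le> q1" "l' \<le> q1" | "\<not> l \<le> q1" "\<not> l' \<le> q1" | "l \<le> q1" "\<not> l' \<le> q1" | "\<not> l \<le> q1" "l' \<le> q1" by auto
        then show "l = l'"
        proof cases
          case 1
          have "ch1 i l = ch1 i l'" using l(3) 1 unfolding ch_def by simp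
          moreover have "l \<in> {1..q1}" "l' \<in> {1..q1}" using l 1 by auto
          ultimately show ?thesis using c1(1) i unfolding inj_on_def by blast
        next
          case 2
          then have "l - q1 \<in> {1..q2}" "l' - q1 \<in> {1..q2}" "ch2 i (l - q1) = ch2 i (l' - q1)"
            using l q2p(4) unfolding ch_def by auto
          then have "l - q1 = l' - q1" using c2(1) i unfolding inj_on_def by blast
          then show ?thesis using 2 by auto
        next
          case 3
          have "ch i l \<in> T i" "ch i l' \<notin> T i" using m1[of l] m2[of l'] l 3 unfolding U_def by auto
          then show ?thesis using l(3) by simp
        next
          case 4
          have "ch i l' \<in> T i" "ch i l \<notin> T i" using m1[of l'] m2[of l] l 4 unfolding U_def by auto
          then show ?thesis using l(3) by simp
        qed
      qed
    qed
    have bnd: "nrm (\<Sum>i\<in>{1..k}. (ch i l - (1 / real q) *\<^sub>R (\<Sum>v\<in>S i. v))) \<le> 2 * DIM('a) * hq q"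
      if k: "k \<le> N" and l: "l \<in> {1..q}" for k l
    proof -
      define E where "E i = (\<Sum>v\<in>T i. v) - (real q1 / real q) *\<^sub>R (\<Sum>v\<in>S i. v)" for i
      have E: "nrm (\<Sum>i\<in>{1..k}. E i) \<le> 2 * DIM('a)" using T(2) k Ta unfolding E_def by simp
      have D0: "0 \<le> real DIM('a)" by simp
      show ?thesis
      proof (cases "l \<le> q1")
        case True
        have "(\<Sum>i\<in>{1..k}. (ch i l - (1 / real q) *\<^sub>R (\<Sum>v\<in>S i. v)))
          = (\<Sum>i\<in>{1..k}. ((ch1 i l - (1 / real q1) *\<^sub>R (\<Sum>v\<in>T i. v)) + (1 / real q1) *\<^sub>R E i))"
        proof (rule sum.cong)
          fix i assume i: "i \<in> {1..k}"
          have "ch i l = ch1 i l" using True unfolding ch_def by simp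
          moreover have "(ch1 i l - (1 / real q1) *\<^sub>R (\<Sum>v\<in>T i. v)) + (1 / real q1) *\<^sub>R ((\<Sum>v\<in>T i. v) - (real q1 / real q) *\<^sub>R (\<Sum>v\<in>S i. v))
              = ch1 i l - (1 / real q) *\<^sub>R (\<Sum>v\<in>S i. v)"
            by (rule vec_id1) (use q1p in auto)
          ultimately show "ch i l - (1 / real q) *\<^sub>R (\<Sum>v\<in>S i. v) = (ch1 i l - (1 / real q1) *\<^sub>R (\<Sum>v\<in>T i. v)) + (1 / real q1) *\<^sub>R E i"
            unfolding E_def by simp
        qed simp
        also have "nrm \<dots> \<le> nrm (\<Sum>i\<in>{1..k}. (ch1 i l - (1 / real q1) *\<^sub>R (\<Sum>v\<in>T i. v))) + \<bar>1 / real q1\<bar> * nrm (\<Sum>i\<in>{1..k}. E i)"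
          by (rule nrm_comb)
        also have "\<dots> \<le> 2 * DIM('a) * hq q1 + (1 / real q1) * (2 * DIM('a))"
        proof (rule add_mono)
          show "nrm (\<Sum>i\<in>{1..k}. (ch1 i l - (1 / real q1) *\<^sub>R (\<Sum>v\<in>T i. v))) \<le> 2 * DIM('a) * hq q1"
            using c1(2) k l True by auto
          have "\<bar>(1 / real q1)\<bar> = 1 / real q1" by simp
          then show "\<bar>(1 / real q1)\<bar> * nrm (\<Sum>i\<in>{1..k}. E i) \<le> (1 / real q1) * (2 * DIM('a))"
            using mult_left_mono[OF E, of "1 / real q1"] by simp
        qed
        also have "\<dots> = 2 * DIM('a) * (hq q1 + 1 / real q1)" by (simp add: algebra_simps)
        also have "\<dots> \<le> 2 * DIM('a) * hq q" by (rule mult_left_mono[OF hq_step[OF q2 q1p(1) q1p(3)]]) simp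
        finally show ?thesis .
      next
        case False
        have l2: "l - q1 \<in> {1..q2}" using False l q2p(4) by auto
        have SU: "(\<Sum>v\<in>U i. v) = (\<Sum>v\<in>S i. v) - (\<Sum>v\<in>T i. v)" if "i \<in> {1..k}" for i
          unfolding U_def using T fin that k by (subst sum_diff) auto
        have "(\<Sum>i\<in>{1..k}. (ch i l - (1 / real q) *\<^sub>R (\<Sum>v\<in>S i. v)))
          = (\<Sum>i\<in>{1..k}. ((ch2 i (l - q1) - (1 / real q2) *\<^sub>R (\<Sum>v\<in>U i. v)) + (- (1 / real q2)) *\<^sub>R E i))"
        proof (rule sum.cong)
          fix i assume i: "i \<in> {1..k}"
          show "ch i l - (1 / real q) *\<^sub>R (\<Sum>v\<in>S i. v) = (ch2 i (l - q1) - (1 / real q2) *\<^sub>R (\<Sum>v\<in>U i. v)) + (- (1 / real q2)) *\<^sub>R E i"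
          proof -
            have "ch i l = ch2 i (l - q1)" using False unfolding ch_def by simp
            moreover have "(ch2 i (l - q1) - (1 / real q2) *\<^sub>R ((\<Sum>v\<in>S i. v) - (\<Sum>v\<in>T i. v))) + (- (1 / real q2)) *\<^sub>R ((\<Sum>v\<in>T i. v) - (real q1 / real q) *\<^sub>R (\<Sum>v\<in>S i. v))
              = ch2 i (l - q1) - (1 / real q) *\<^sub>R (\<Sum>v\<in>S i. v)"
              by (rule vec_id2) (use q1p q2p in auto)
            ultimately show ?thesis unfolding E_def SU[OF i] by simp
          qed
        qed simp
        also have "nrm \<dots> \<le> nrm (\<Sum>i\<in>{1..k}. (ch2 i (l - q1) - (1 / real q2) *\<^sub>R (\<Sum>v\<in>U i. v))) + \<bar>- (1 / real q2)\<bar> * nrm (\<Sum>i\<in>{1..k}. E i)"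
          by (rule nrm_comb)
        also have "\<dots> \<le> 2 * DIM('a) * hq q2 + (1 / real q2) * (2 * DIM('a))"
        proof (rule add_mono)
          show "nrm (\<Sum>i\<in>{1..k}. (ch2 i (l - q1) - (1 / real q2) *\<^sub>R (\<Sum>v\<in>U i. v))) \<le> 2 * DIM('a) * hq q2"
            using c2(2) k l2 by auto
          have "\<bar>- (1 / real q2)\<bar> = 1 / real q2" by simp
          then show "\<bar>- (1 / real q2)\<bar> * nrm (\<Sum>i\<in>{1..k}. E i) \<le> (1 / real q2) * (2 * DIM('a))"
            using mult_left_mono[OF E, of "1 / real q2"] by simp
        qed
        also have "\<dots> = 2 * DIM('a) * (hq q2 + 1 / real q2)" by (simp add: algebra_simps)
        also have "\<dots> \<le> 2 * DIM('a) * hq q" by (rule mult_left_mono[OF hq_step[OF q2 q2p(1) q2p(3)]]) simp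
        finally show ?thesis .
      qed
    qed
    show ?thesis using inj bnd by (intro exI[of _ ch]) auto
  qed
qed

end


theorem corollary6:
  fixes nrm :: "real ^ 'd \<Rightarrow> real"
    and V :: "nat \<Rightarrow> (real ^ 'd) set"
    and r N :: nat
  assumes "is_norm nrm"
    and "0 < r" and "0 < N"
    and "\<And>i. i \<in> {1..N} \<Longrightarrow> finite (V i)"
    and "\<And>i. i \<in> {1..N} \<Longrightarrow> V i \<subseteq> {v. nrm v \<le> 1}"
    and "\<And>i. i \<in> {1..N} \<Longrightarrow> (\<Sum>v\<in>V i. v) = 0"
    and "\<And>i. i \<in> {1..N} \<Longrightarrow> card (V i) \<ge> r"
  shows "\<exists>chi. r_selection N r V chi \<and>
           (\<forall>n\<in>{1..N}. \<forall>l\<in>{1..r}. nrm (\<Sum>i=1..n. chi i l) \<le> 5 * real CARD('d))"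
proof -
  note nrm = assms(1)
  have fin: "\<forall>i\<in>{1..N}. finite (V i)" and ball: "\<forall>i\<in>{1..N}. \<forall>v\<in>V i. nrm v \<le> 1"
    using assms(4,5) by blast+
  define a0 where "a0 i v = real r / real (card (V i))" for i :: nat and v :: "real ^ 'd"
  have val: "valid N V (\<lambda>_. r) a0" unfolding valid_def a0_def
  proof (rule ballI, rule conjI)
    fix i assume i: "i \<in> {1..N}"
    have c: "r \<le> card (V i)" using assms(7) i by auto
    then have cp: "0 < real (card (V i))" using assms(2) by linarith
    show "\<forall>v\<in>V i. 0 \<le> real r / real (card (V i)) \<and> real r / real (card (V i)) \<le> 1"
      using c cp by (auto simp: field_simps)
    show "(\<Sum>v\<in>V i. real r / real (card (V i))) = real r" using cp by simp
  qed
  obtain T where T: "\<forall>i\<in>{1..N}. T i \<subseteq> V i \<and> card (T i) = r"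
    "\<forall>k\<le>N. nrm (\<Sum>i\<in>{1..k}. ((\<Sum>v\<in>T i. v) - (\<Sum>v\<in>V i. a0 i v *\<^sub>R v))) \<le> 2 * DIM(real ^ 'd)"
    using RL[OF nrm fin ball val] by auto
  have z: "(\<Sum>v\<in>V i. a0 i v *\<^sub>R v) = 0" if "i \<in> {1..N}" for i
    unfolding a0_def using assms(6)[OF that] by (simp add: scaleR_sum_right[symmetric])
  have T2: "nrm (\<Sum>i\<in>{1..k}. (\<Sum>v\<in>T i. v)) \<le> 2 * DIM(real ^ 'd)" if "k \<le> N" for k
  proof -
    have "(\<Sum>i\<in>{1..k}. ((\<Sum>v\<in>T i. v) - (\<Sum>v\<in>V i. a0 i v *\<^sub>R v))) = (\<Sum>i\<in>{1..k}. (\<Sum>v\<in>T i. v))"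
      using z that by (intro sum.cong) auto
    moreover have "nrm (\<Sum>i\<in>{1..k}. ((\<Sum>v\<in>T i. v) - (\<Sum>v\<in>V i. a0 i v *\<^sub>R v))) \<le> 2 * DIM(real ^ 'd)"
      using T(2) that by blast
    ultimately show ?thesis by simp
  qed
  have Tp: "\<forall>i\<in>{1..N}. finite (T i) \<and> card (T i) = r \<and> (\<forall>v\<in>T i. nrm v \<le> 1)"
  proof (rule ballI)
    fix i assume i: "i \<in> {1..N}"
    have s: "T i \<subseteq> V i" "card (T i) = r" using T(1) i by auto
    have "finite (T i)" using s(1) fin i by (meson finite_subset)
    moreover have "\<forall>v\<in>T i. nrm v \<le> 1" using s(1) ball i by blast
    ultimately show "finite (T i) \<and> card (T i) = r \<and> (\<forall>v\<in>T i. nrm v \<le> 1)" using s(2) by simp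
  qed
  have r1: "1 \<le> r" using assms(2) by simp
  obtain ch where ch: "\<forall>i\<in>{1..N}. inj_on (ch i) {1..r} \<and> ch i ` {1..r} \<subseteq> T i"
    "\<forall>k\<le>N. \<forall>l\<in>{1..r}. nrm (\<Sum>i\<in>{1..k}. (ch i l - (1 / real r) *\<^sub>R (\<Sum>v\<in>T i. v))) \<le> 2 * DIM(real ^ 'd) * hq r"
    using tree[OF nrm r1 Tp] by blast
  have sel: "r_selection N r V ch" unfolding r_selection_def using ch(1) T(1) by blast
  have bnd: "nrm (\<Sum>i=1..n. ch i l) \<le> 5 * real CARD('d)" if n: "n \<in> {1..N}" and l: "l \<in> {1..r}" for n l
  proof -
    have "(\<Sum>i=1..n. ch i l) = (\<Sum>i\<in>{1..n}. ((ch i l - (1 / real r) *\<^sub>R (\<Sum>v\<in>T i. v)) + (1 / real r) *\<^sub>R (\<Sum>v\<in>T i. v)))"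
      by simp
    also have "nrm \<dots> \<le> nrm (\<Sum>i\<in>{1..n}. (ch i l - (1 / real r) *\<^sub>R (\<Sum>v\<in>T i. v))) + \<bar>1 / real r\<bar> * nrm (\<Sum>i\<in>{1..n}. (\<Sum>v\<in>T i. v))"
      by (rule nrm_comb[OF nrm])
    also have "\<dots> \<le> 2 * DIM(real ^ 'd) * hq r + (1 / real r) * (2 * DIM(real ^ 'd))"
    proof (rule add_mono)
      show "nrm (\<Sum>i\<in>{1..n}. (ch i l - (1 / real r) *\<^sub>R (\<Sum>v\<in>T i. v))) \<le> 2 * DIM(real ^ 'd) * hq r"
        using ch(2) n l by auto
      have "\<bar>1 / real r\<bar> = 1 / real r" by simp
      moreover have Tn: "nrm (\<Sum>i\<in>{1..n}. (\<Sum>v\<in>T i. v)) \<le> 2 * DIM(real ^ 'd)" using T2 n by auto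
      ultimately show "\<bar>1 / real r\<bar> * nrm (\<Sum>i\<in>{1..n}. (\<Sum>v\<in>T i. v)) \<le> (1 / real r) * (2 * DIM(real ^ 'd))"
        using mult_left_mono[OF Tn, of "1 / real r"] by simp
    qed
    also have "\<dots> = 2 * DIM(real ^ 'd) * (hq r + 1 / real r)" by (simp add: algebra_simps)
    also have "\<dots> \<le> 2 * DIM(real ^ 'd) * (5/2)" by (rule mult_left_mono[OF hq_final]) (use assms(2) in auto)
    also have "\<dots> = 5 * real CARD('d)" by simp
    finally show ?thesis .
  qed
  show ?thesis using sel bnd by blast
qed

end
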